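(* Let $n\ge 1$ and $1\le r\le n$. Then for every integer $z$ (equivalently, as a polynomial identity in $z$), $$ \alpha(n;k_1,\ldots,k_{r-1},k_{r}+z,k_{r+1},\ldots,k_n) = \sum_{p=0}^{\infty} (-1)^p \binom{n-1-p+z}{n-1} e_p(E_{k_1},\ldots,\widehat{E_{k_r}},\ldots,E_{k_n}) \, \alpha(n;k_1,\ldots,k_n), $$ where $\widehat{E_{k_r}}$ indicates that $E_{k_r}$ is omitted.
   Context: $E_x$ denotes the shift operator $E_x p(x)=p(x+1)$ acting on polynomials in the variables $k_1,\ldots,k_n$, and $\mathrm{id}$ is the identity. $\alpha(n;k_1,\ldots,k_n)$ is the polynomial $$\alpha(n;k_1,\ldots,k_n)=\prod_{1\le p<q\le n}(\mathrm{id}-E_{k_p}+E_{k_p}E_{k_q})\prod_{1\le i<j\le n}\frac{k_j-k_i}{j-i}$$ (for strictly increasing integers $k_1<\dots<k_n$ it counts monotone triangles with bottom row $(k_1,\ldots,k_n)$). $e_p$ denotes the $p$-th elementary symmetric function ($e_0=1$, $e_p=0$ for $p$ larger than the number of arguments), here evaluated at commuting shift operators. $\binom{x}{m}=x(x-1)\cdots(x-m+1)/m!$. *)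

theory Defs
  imports Complex_Main
begin

text \<open>Polynomials in k_1..k_n are represented by the functions they induce on
integer points: a point is a map k :: nat => int, of which only k 1, ..., k n matter.
Shift operators act on such functions.\<close>

definition shiftE :: "nat \<Rightarrow> ((nat \<Rightarrow> int) \<Rightarrow> rat) \<Rightarrow> ((nat \<Rightarrow> int) \<Rightarrow> rat)" where
  "shiftE i f = (\<lambda>k. f (k(i := k i + 1)))"

definition opT :: "nat \<Rightarrow> nat \<Rightarrow> ((nat \<Rightarrow> int) \<Rightarrow> rat) \<Rightarrow> ((nat \<Rightarrow> int) \<Rightarrow> rat)" where
  "opT p q f = (\<lambda>k. f k - shiftE p f k + shiftE p (shiftE q f) k)"

definition vdm :: "nat \<Rightarrow> (nat \<Rightarrow> int) \<Rightarrow> rat" where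
  "vdm n k = (\<Prod>i\<in>{1..n}. \<Prod>j\<in>{i<..n}. of_int (k j - k i) / of_nat (j - i))"

text \<open>alpha(n; k_1..k_n) = prod_{1<=p<q<=n} (id - E_p + E_p E_q) applied to vdm n
(the operators commute; we compose them in lexicographic order of (p,q)).\<close>
definition alpha :: "nat \<Rightarrow> (nat \<Rightarrow> int) \<Rightarrow> rat" where
  "alpha n = foldr (\<lambda>(p, q). opT p q) [(p, q). p \<leftarrow> [1..<n+1], q \<leftarrow> [Suc p..<n+1]] (vdm n)"

text \<open>e_p(E_{k_1},...,omitted E_{k_r},...,E_{k_n}) applied to f: sum over p-subsets S of
{1..n}-{r} of the product of the shifts E_i, i in S.\<close>
definition esym_shift :: "nat \<Rightarrow> nat \<Rightarrow> nat \<Rightarrow> ((nat \<Rightarrow> int) \<Rightarrow> rat) \<Rightarrow> ((nat \<Rightarrow> int) \<Rightarrow> rat)" where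
  "esym_shift n r p f = (\<lambda>k. \<Sum>S\<in>{S. S \<subseteq> {1..n} - {r} \<and> card S = p}.
      f (\<lambda>i. if i \<in> S then k i + 1 else k i))"

end

theory Submission
  imports Defs "Jordan_Normal_Form.Determinant" "HOL-Computational_Algebra.Formal_Power_Series" "HOL-Computational_Algebra.Polynomial"
begin


definition V :: "nat \<Rightarrow> (nat \<Rightarrow> rat) \<Rightarrow> rat" where
  "V m x = (\<Prod>i=0..<m. \<Prod>j=Suc i..<m. (x j - x i) / of_nat (j - i))"

definition BM :: "nat \<Rightarrow> (nat \<Rightarrow> rat) \<Rightarrow> rat mat" where
  "BM m x = mat m m (\<lambda>(i,j). x i gchoose j)"

lemma BM_carrier[simp]: "BM m x \<in> carrier_mat m m"
  by (simp add: BM_def)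

lemma V_shift: "V m (\<lambda>i. x i + c) = V m x"
  by (simp add: V_def)

lemma V_Suc: "V (Suc m) x = (\<Prod>i=0..<m. (x (Suc i) - x 0) / of_nat (Suc i)) * V m (\<lambda>i. x (Suc i))"
  unfolding V_def by (simp only: prod.atLeast0_lessThan_Suc_shift comp_def prod.shift_bounds_Suc_ivl diff_Suc_Suc diff_zero)

lemma det_BM_shift: "det (BM m (\<lambda>i. x i + c)) = det (BM m x)"
proof -
  define U :: "rat mat" where "U = mat m m (\<lambda>(l,j). if l \<le> j then c gchoose (j - l) else 0)"
  have U: "U \<in> carrier_mat m m" by (simp add: U_def)
  have eq: "BM m (\<lambda>i. x i + c) = BM m x * U"
  proof (rule eq_matI)
    fix i j assume i: "i < dim_row (BM m x * U)" and j: "j < dim_col (BM m x * U)"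
    then have im: "i < m" and jm: "j < m" by (auto simp: BM_def U_def)
    have "(BM m x * U) $$ (i,j) = (\<Sum>l<m. (x i gchoose l) * (if l \<le> j then c gchoose (j - l) else 0))"
      using im jm by (simp add: BM_def U_def scalar_prod_def atLeast0LessThan)
    also have "\<dots> = (\<Sum>l\<in>{0..j}. (x i gchoose l) * (c gchoose (j - l)))"
      using jm by (intro sum.mono_neutral_cong_right) (auto split: if_splits)
    also have "\<dots> = (x i + c) gchoose j" by (rule gbinomial_Vandermonde)
    finally show "BM m (\<lambda>i. x i + c) $$ (i, j) = (BM m x * U) $$ (i, j)"
      using im jm by (simp add: BM_def)
  qed (auto simp: BM_def U_def)
  have "det U = 1"
  proof -
    have "upper_triangular U" by (auto simp: upper_triangular_def U_def)
    then have "det U = prod_list (diag_mat U)" using det_upper_triangular U by blast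
    also have "\<dots> = 1" unfolding prod_list_diag_prod by (simp add: U_def) 
    finally show ?thesis .
  qed
  then show ?thesis using eq det_mult[OF BM_carrier U] by simp
qed


lemma det_mat_fun:
  "det (mat m m (\<lambda>(i,j). g i j)) = (\<Sum>p\<in>{p. p permutes {0..<m}}. signof p * (\<Prod>i=0..<m. g i (p i)))"
  unfolding det_def'[of "mat m m (\<lambda>(i,j). g i j)" m, OF mat_carrier]
proof (rule sum.cong[OF refl])
  fix p assume p: "p \<in> {p. p permutes {0..<m}}"
  have "(\<Prod>i=0..<m. mat m m (\<lambda>(i,j). g i j) $$ (i, p i)) = (\<Prod>i=0..<m. g i (p i))"
  proof (rule prod.cong[OF refl])
    fix i assume "i \<in> {0..<m}"
    then have "p i < m" using p permutes_in_image by fastforce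
    then show "mat m m (\<lambda>(i,j). g i j) $$ (i, p i) = g i (p i)"
      using \<open>i \<in> {0..<m}\<close> by simp
  qed
  then show "signof p * (\<Prod>i=0..<m. mat m m (\<lambda>(i,j). g i j) $$ (i, p i)) =
    signof p * (\<Prod>i=0..<m. g i (p i))" by simp
qed

lemma det_scale:
  fixes a b :: "nat \<Rightarrow> 'a::comm_ring_1"
  shows "det (mat m m (\<lambda>(i,j). a i * b j * f i j)) =
    prod a {0..<m} * prod b {0..<m} * det (mat m m (\<lambda>(i,j). f i j))"
proof -
  have "det (mat m m (\<lambda>(i,j). a i * b j * f i j)) =
     (\<Sum>p\<in>{p. p permutes {0..<m}}. signof p * (\<Prod>i=0..<m. a i * b (p i) * f i (p i)))"
    unfolding det_def'[of "mat m m (\<lambda>(i,j). a i * b j * f i j)" m, OF mat_carrier]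
  proof (rule sum.cong[OF refl])
    fix p assume p: "p \<in> {p. p permutes {0..<m}}"
    have "(\<Prod>i=0..<m. mat m m (\<lambda>(i,j). a i * b j * f i j) $$ (i, p i)) = (\<Prod>i=0..<m. a i * b (p i) * f i (p i))"
    proof (rule prod.cong[OF refl])
      fix i assume "i \<in> {0..<m}"
      then have "p i < m" using p permutes_in_image by fastforce
      then show "mat m m (\<lambda>(i,j). a i * b j * f i j) $$ (i, p i) = a i * b (p i) * f i (p i)"
        using \<open>i \<in> {0..<m}\<close> by simp
    qed
    then show "signof p * (\<Prod>i=0..<m. mat m m (\<lambda>(i,j). a i * b j * f i j) $$ (i, p i)) =
      signof p * (\<Prod>i=0..<m. a i * b (p i) * f i (p i))" by simp
  qed
  also have "\<dots> = (\<Sum>p\<in>{p. p permutes {0..<m}}. prod a {0..<m} * prod b {0..<m} * (signof p * (\<Prod>i=0..<m. f i (p i))))"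
  proof (rule sum.cong[OF refl])
    fix p assume p: "p \<in> {p. p permutes {0..<m}}"
    then have bp: "(\<Prod>i=0..<m. b (p i)) = prod b {0..<m}"
      using prod.permute[of p "{0..<m}" b] by (simp add: comp_def)
    have "(\<Prod>i=0..<m. a i * b (p i) * f i (p i)) = prod a {0..<m} * (\<Prod>i=0..<m. b (p i)) * (\<Prod>i=0..<m. f i (p i))"
      by (simp add: prod.distrib)
    then show "signof p * (\<Prod>i=0..<m. a i * b (p i) * f i (p i)) =
      prod a {0..<m} * prod b {0..<m} * (signof p * (\<Prod>i=0..<m. f i (p i)))"
      using bp by (simp add: ac_simps)
  qed
  also have "\<dots> = prod a {0..<m} * prod b {0..<m} * det (mat m m (\<lambda>(i,j). f i j))"
  proof -
    have "det (mat m m (\<lambda>(i,j). f i j)) = (\<Sum>p\<in>{p. p permutes {0..<m}}. signof p * (\<Prod>i=0..<m. f i (p i)))"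
      unfolding det_def'[of "mat m m (\<lambda>(i,j). f i j)" m, OF mat_carrier]
    proof (rule sum.cong[OF refl])
      fix p assume p: "p \<in> {p. p permutes {0..<m}}"
      have "(\<Prod>i=0..<m. mat m m (\<lambda>(i,j). f i j) $$ (i, p i)) = (\<Prod>i=0..<m. f i (p i))"
      proof (rule prod.cong[OF refl])
        fix i assume "i \<in> {0..<m}"
        then have "p i < m" using p permutes_in_image by fastforce
        then show "mat m m (\<lambda>(i,j). f i j) $$ (i, p i) = f i (p i)"
          using \<open>i \<in> {0..<m}\<close> by simp
      qed
      then show "signof p * (\<Prod>i=0..<m. mat m m (\<lambda>(i,j). f i j) $$ (i, p i)) =
        signof p * (\<Prod>i=0..<m. f i (p i))" by simp
    qed
    then show ?thesis by (simp add: sum_distrib_left)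
  qed
  finally show ?thesis .
qed

lemma det_BM: "det (BM m x) = V m x"
proof (induction m arbitrary: x)
  case 0
  then show ?case by (simp add: V_def BM_def)
next
  case (Suc m)
  define y where "y = (\<lambda>i. x i - x 0)"
  have "det (BM (Suc m) x) = det (BM (Suc m) y)"
    using det_BM_shift[of "Suc m" x "- x 0"] by (simp add: y_def)
  also have "\<dots> = det (mat_delete (BM (Suc m) y) 0 0)"
  proof -
    have "det (BM (Suc m) y) = (\<Sum>j<Suc m. BM (Suc m) y $$ (0,j) * cofactor (BM (Suc m) y) 0 j)"
      by (rule laplace_expansion_row) auto
    also have "\<dots> = (\<Sum>j<Suc m. (if j = 0 then cofactor (BM (Suc m) y) 0 j else 0))"
      by (rule sum.cong[OF refl]) (simp add: BM_def y_def gbinomial_0_left)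
    also have "\<dots> = cofactor (BM (Suc m) y) 0 0" by simp
    finally show ?thesis by (simp add: cofactor_def)
  qed
  also have "mat_delete (BM (Suc m) y) 0 0 =
     mat m m (\<lambda>(i,j). y (Suc i) * (1 / of_nat (Suc j)) * ((y (Suc i) - 1) gchoose j))"
  proof (rule eq_matI)
    fix i j assume "i < dim_row (mat m m (\<lambda>(i,j). y (Suc i) * (1 / of_nat (Suc j)) * ((y (Suc i) - 1) gchoose j)))"
      "j < dim_col (mat m m (\<lambda>(i,j). y (Suc i) * (1 / of_nat (Suc j)) * ((y (Suc i) - 1) gchoose j)))"
    then have ij: "i < m" "j < m" by auto
    have "of_nat (Suc j) * (y (Suc i) gchoose Suc j) = y (Suc i) * ((y (Suc i) - 1) gchoose j)"
      by (rule gbinomial_absorption)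
    then have "y (Suc i) gchoose Suc j = y (Suc i) * (1 / of_nat (Suc j)) * ((y (Suc i) - 1) gchoose j)"
      by (simp add: field_simps del: of_nat_Suc)
    then show "mat_delete (BM (Suc m) y) 0 0 $$ (i, j) =
      mat m m (\<lambda>(i,j). y (Suc i) * (1 / of_nat (Suc j)) * ((y (Suc i) - 1) gchoose j)) $$ (i, j)"
      using ij by (simp add: mat_delete_def BM_def)
  qed (auto simp: mat_delete_def BM_def)
  also have "det \<dots> = (\<Prod>i=0..<m. y (Suc i)) * (\<Prod>j=0..<m. 1 / of_nat (Suc j)) * det (BM m (\<lambda>i. y (Suc i) - 1))"
    unfolding BM_def by (rule det_scale)
  also have "det (BM m (\<lambda>i. y (Suc i) - 1)) = V m (\<lambda>i. x (Suc i))"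
    using Suc.IH[of "\<lambda>i. y (Suc i) - 1"] V_shift[of m "\<lambda>i. x (Suc i)" "- x 0 - 1"]
    by (simp add: y_def algebra_simps)
  also have "(\<Prod>i=0..<m. y (Suc i)) * (\<Prod>j=0..<m. 1 / of_nat (Suc j)) = (\<Prod>i=0..<m. (x (Suc i) - x 0) / of_nat (Suc i))"
    by (simp add: y_def prod.distrib[symmetric] del: of_nat_Suc)
  finally show ?case by (simp add: V_Suc)
qed


lemma BM_shift_sum:
  fixes t :: rat
  shows "(\<Sum>S\<in>Pow {0..<m}. t ^ card S * det (BM m (\<lambda>i. if i \<in> S then x i + 1 else x i)))
     = (1 + t) ^ m * det (BM m x)"
proof -
  define Q :: "rat mat" where "Q = mat m m (\<lambda>(i,j). if i = j then 1 + t else if j = Suc i then t else 0)"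
  have Q: "Q \<in> carrier_mat m m" by (simp add: Q_def)
  have detQ: "det Q = (1 + t) ^ m"
  proof -
    have "upper_triangular Q" by (auto simp: upper_triangular_def Q_def)
    then have "det Q = prod_list (diag_mat Q)" using det_upper_triangular Q by blast
    also have "\<dots> = (1 + t) ^ m" unfolding prod_list_diag_prod by (simp add: Q_def)
    finally show ?thesis .
  qed
  have eq: "BM m x * Q = mat m m (\<lambda>(i,j). (x i gchoose j) + t * ((x i + 1) gchoose j))"
  proof (rule eq_matI)
    fix i j assume "i < dim_row (mat m m (\<lambda>(i,j). (x i gchoose j) + t * ((x i + 1) gchoose j)))"
      "j < dim_col (mat m m (\<lambda>(i,j). (x i gchoose j) + t * ((x i + 1) gchoose j)))"
    then have im: "i < m" and jm: "j < m" by auto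
    have "(BM m x * Q) $$ (i,j) = (\<Sum>l<m. (x i gchoose l) * (if l = j then 1 + t else if j = Suc l then t else 0))"
      using im jm by (simp add: BM_def Q_def scalar_prod_def atLeast0LessThan)
    also have "\<dots> = (\<Sum>l<m. (if l = j then (x i gchoose l) * (1 + t) else 0) + (if j = Suc l then (x i gchoose l) * t else 0))"
      by (rule sum.cong[OF refl]) auto
    also have "\<dots> = (x i gchoose j) * (1 + t) + (\<Sum>l<m. if j = Suc l then (x i gchoose l) * t else 0)"
      using jm by (simp add: sum.distrib)
    also have "(\<Sum>l<m. if j = Suc l then (x i gchoose l) * t else 0) = (if j = 0 then 0 else (x i gchoose (j - 1)) * t)"
    proof (cases j)
      case 0 then show ?thesis by simp
    next
      case (Suc j')
      then have "j' < m" using jm by simp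
      then show ?thesis using Suc by (simp add: eq_commute[of "Suc j'"])
    qed
    also have "(x i gchoose j) * (1 + t) + (if j = 0 then 0 else (x i gchoose (j - 1)) * t) = (x i gchoose j) + t * ((x i + 1) gchoose j)"
    proof (cases j)
      case 0 then show ?thesis by (simp add: algebra_simps)
    next
      case (Suc j')
      then show ?thesis by (simp add: gbinomial_Suc_Suc) (simp add: algebra_simps)
    qed
    finally show "(BM m x * Q) $$ (i, j) = mat m m (\<lambda>(i,j). (x i gchoose j) + t * ((x i + 1) gchoose j)) $$ (i, j)"
      using im jm by simp
  qed (auto simp: BM_def Q_def)
  have "(1 + t) ^ m * det (BM m x) = det (BM m x * Q)"
    using det_mult[OF BM_carrier Q] detQ by simp
  also have "\<dots> = (\<Sum>p\<in>{p. p permutes {0..<m}}. signof p * (\<Prod>i=0..<m. (x i gchoose p i) + t * ((x i + 1) gchoose p i)))"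
    unfolding eq by (rule det_mat_fun)
  also have "\<dots> = (\<Sum>p\<in>{p. p permutes {0..<m}}. \<Sum>S\<in>Pow {0..<m}. t ^ card S * (signof p * (\<Prod>i=0..<m. (if i \<in> S then x i + 1 else x i) gchoose p i)))"
  proof (rule sum.cong[OF refl])
    fix p
    have "(\<Prod>i=0..<m. t * ((x i + 1) gchoose p i) + (x i gchoose p i)) =
      (\<Sum>S\<in>Pow {0..<m}. (\<Prod>i\<in>S. t * ((x i + 1) gchoose p i)) * (\<Prod>i\<in>{0..<m} - S. (x i gchoose p i)))"
      by (rule prod_add) simp
    also have "\<dots> = (\<Sum>S\<in>Pow {0..<m}. t ^ card S * (\<Prod>i=0..<m. (if i \<in> S then x i + 1 else x i) gchoose p i))"
    proof (rule sum.cong[OF refl])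
      fix S assume "S \<in> Pow {0..<m}"
      then have S: "S \<subseteq> {0..<m}" by simp
      have "(\<Prod>i=0..<m. (if i \<in> S then x i + 1 else x i) gchoose p i) =
          (\<Prod>i\<in>S. (x i + 1) gchoose p i) * (\<Prod>i\<in>{0..<m} - S. x i gchoose p i)"
      proof -
        have "(\<Prod>i=0..<m. (if i \<in> S then x i + 1 else x i) gchoose p i) =
            (\<Prod>i\<in>{0..<m} - S. (if i \<in> S then x i + 1 else x i) gchoose p i) * (\<Prod>i\<in>S. (if i \<in> S then x i + 1 else x i) gchoose p i)"
          by (rule prod.subset_diff[OF S]) simp
        also have "\<dots> = (\<Prod>i\<in>{0..<m} - S. x i gchoose p i) * (\<Prod>i\<in>S. (x i + 1) gchoose p i)"
          by (intro arg_cong2[where f = "(*)"] prod.cong) auto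
        finally show ?thesis by (simp add: mult.commute)
      qed
      moreover have "(\<Prod>i\<in>S. t * ((x i + 1) gchoose p i)) = t ^ card S * (\<Prod>i\<in>S. (x i + 1) gchoose p i)"
        by (simp add: prod.distrib)
      ultimately show "(\<Prod>i\<in>S. t * ((x i + 1) gchoose p i)) * (\<Prod>i\<in>{0..<m} - S. (x i gchoose p i)) =
          t ^ card S * (\<Prod>i=0..<m. (if i \<in> S then x i + 1 else x i) gchoose p i)"
        by (simp add: mult.assoc)
    qed
    finally have "(\<Prod>i=0..<m. (x i gchoose p i) + t * ((x i + 1) gchoose p i)) =
       (\<Sum>S\<in>Pow {0..<m}. t ^ card S * (\<Prod>i=0..<m. (if i \<in> S then x i + 1 else x i) gchoose p i))"
      by (simp add: add.commute)
    then show "signof p * (\<Prod>i=0..<m. (x i gchoose p i) + t * ((x i + 1) gchoose p i)) =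
      (\<Sum>S\<in>Pow {0..<m}. t ^ card S * (signof p * (\<Prod>i=0..<m. (if i \<in> S then x i + 1 else x i) gchoose p i)))"
      by (simp add: sum_distrib_left ac_simps)
  qed
  also have "\<dots> = (\<Sum>S\<in>Pow {0..<m}. t ^ card S * (\<Sum>p\<in>{p. p permutes {0..<m}}. signof p * (\<Prod>i=0..<m. (if i \<in> S then x i + 1 else x i) gchoose p i)))"
    by (subst sum.swap) (simp add: sum_distrib_left)
  also have "\<dots> = (\<Sum>S\<in>Pow {0..<m}. t ^ card S * det (BM m (\<lambda>i. if i \<in> S then x i + 1 else x i)))"
    unfolding BM_def by (simp only: det_mat_fun)
  finally show ?thesis by simp
qed



lemma vdm_V: "vdm n k = V n (\<lambda>i. of_int (k (Suc i)))"
proof -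
  have e1: "{1..n} = {Suc 0..<Suc n}" by auto
  have e2: "\<And>i. {i<..n} = {Suc i..<Suc n}" by auto
  show ?thesis
    unfolding vdm_def V_def e1 e2 by (simp only: prod.shift_bounds_Suc_ivl diff_Suc_Suc of_int_diff)
qed

lemma Pow_Suc: "Pow {1..n} = image Suc ` Pow {0..<n}"
proof
  show "Pow {1..n} \<subseteq> image Suc ` Pow {0..<n}"
  proof
    fix S assume "S \<in> Pow {1..n}"
    moreover have "Suc ` {0..<n} = {1..n}" by (simp add: atLeast0LessThan image_Suc_lessThan)
    ultimately have "S \<subseteq> Suc ` {0..<n}" by simp
    from subset_image_iff[THEN iffD1, OF this] obtain T where "T \<subseteq> {0..<n}" "S = Suc ` T" by blast
    then show "S \<in> image Suc ` Pow {0..<n}" by auto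
  qed
qed auto

lemma vdm_shift_sum:
  fixes t :: rat
  shows "(\<Sum>S\<in>Pow {1..n}. t ^ card S * vdm n (\<lambda>i. if i \<in> S then k i + 1 else k i)) = (1 + t) ^ n * vdm n k"
proof -
  define x where "x = (\<lambda>i. (of_int (k (Suc i)) :: rat))"
  have inj: "inj_on (image Suc) (Pow {0..<n})" by (simp add: inj_on_def inj_image_eq_iff)
  have "(\<Sum>S\<in>Pow {1..n}. t ^ card S * vdm n (\<lambda>i. if i \<in> S then k i + 1 else k i))
     = (\<Sum>S\<in>Pow {0..<n}. t ^ card (Suc ` S) * vdm n (\<lambda>i. if i \<in> Suc ` S then k i + 1 else k i))"
    unfolding Pow_Suc by (rule sum.reindex[OF inj, unfolded comp_def])
  also have "\<dots> = (\<Sum>S\<in>Pow {0..<n}. t ^ card S * det (BM n (\<lambda>i. if i \<in> S then x i + 1 else x i)))"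
  proof (rule sum.cong[OF refl])
    fix S assume "S \<in> Pow {0..<n}"
    have "card (Suc ` S) = card S" by (simp add: card_image)
    moreover have "vdm n (\<lambda>i. if i \<in> Suc ` S then k i + 1 else k i) = det (BM n (\<lambda>i. if i \<in> S then x i + 1 else x i))"
      unfolding vdm_V det_BM x_def by (rule arg_cong[where f = "V n"]) (auto simp: inj_image_mem_iff)
    ultimately show "t ^ card (Suc ` S) * vdm n (\<lambda>i. if i \<in> Suc ` S then k i + 1 else k i) =
      t ^ card S * det (BM n (\<lambda>i. if i \<in> S then x i + 1 else x i))" by simp
  qed
  also have "\<dots> = (1 + t) ^ n * det (BM n x)" by (rule BM_shift_sum)
  also have "det (BM n x) = vdm n k" unfolding det_BM vdm_V x_def ..
  finally show ?thesis .
qed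

lemma coeffs_eq_rat:
  fixes c d :: "nat \<Rightarrow> rat"
  assumes "\<And>t. (\<Sum>q\<le>n. c q * t ^ q) = (\<Sum>q\<le>n. d q * t ^ q)" and "q \<le> n"
  shows "c q = d q"
proof -
  define P where "P = (\<Sum>i\<le>n. monom (c i) i)"
  define Q where "Q = (\<Sum>i\<le>n. monom (d i) i)"
  have "poly P = poly Q"
    by (rule ext) (simp add: P_def Q_def poly_sum poly_monom assms(1))
  then have "P = Q" by (simp add: poly_eq_poly_eq_iff)
  then have "coeff P q = coeff Q q" by simp
  then show ?thesis using assms(2) by (simp add: P_def Q_def coeff_sum coeff_monom)
qed

lemma vdm_esym:
  "(\<Sum>S\<in>{S. S \<subseteq> {1..n} \<and> card S = q}. vdm n (\<lambda>i. if i \<in> S then k i + 1 else k i)) = of_nat (n choose q) * vdm n k"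
proof -
  define a where "a q = (\<Sum>S\<in>{S. S \<subseteq> {1..n} \<and> card S = q}. vdm n (\<lambda>i. if i \<in> S then k i + 1 else k i))" for q
  show ?thesis
  proof (cases "q \<le> n")
    case False
    have E: "{S. S \<subseteq> {1..n} \<and> card S = q} = {}"
    proof -
      { fix S assume "S \<subseteq> {1..n}" "card S = q"
        then have "card S \<le> n" using card_mono[of "{1..n}" S] by simp
        then have False using False \<open>card S = q\<close> by simp }
      then show ?thesis by blast
    qed
    then show ?thesis unfolding E using False by simp
  next
    case True
    have "\<And>t::rat. (\<Sum>q\<le>n. a q * t ^ q) = (\<Sum>q\<le>n. (of_nat (n choose q) * vdm n k) * t ^ q)"
    proof -
      fix t :: rat
      have "(\<Sum>S\<in>Pow {1..n}. t ^ card S * vdm n (\<lambda>i. if i \<in> S then k i + 1 else k i))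
          = (\<Sum>q\<le>n. \<Sum>S\<in>{S\<in>Pow {1..n}. card S = q}. t ^ card S * vdm n (\<lambda>i. if i \<in> S then k i + 1 else k i))"
        by (rule sum.group[symmetric]) (auto simp: card_mono[of "{1..n}", simplified])
      also have "\<dots> = (\<Sum>q\<le>n. a q * t ^ q)"
        unfolding a_def by (rule sum.cong[OF refl]) (auto simp: sum_distrib_right intro!: sum.cong)
      finally have "(\<Sum>q\<le>n. a q * t ^ q) = (1 + t) ^ n * vdm n k" using vdm_shift_sum by simp
      also have "\<dots> = (\<Sum>q\<le>n. (of_nat (n choose q) * vdm n k) * t ^ q)"
      proof -
        have "(1 + t) ^ n = (\<Sum>q\<le>n. of_nat (n choose q) * t ^ q)"
          by (subst add.commute, subst binomial_ring) simp
        then show ?thesis by (simp add: sum_distrib_left sum_distrib_right ac_simps)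
      qed
      finally show "(\<Sum>q\<le>n. a q * t ^ q) = (\<Sum>q\<le>n. (of_nat (n choose q) * vdm n k) * t ^ q)" .
    qed
    from coeffs_eq_rat[OF this True] show ?thesis by (simp add: a_def)
  qed
qed



definition shiftS :: "(nat \<Rightarrow> int) \<Rightarrow> nat set \<Rightarrow> (nat \<Rightarrow> int)" where
  "shiftS k S = (\<lambda>i. if i \<in> S then k i + 1 else k i)"

definition sig :: "nat \<Rightarrow> nat \<Rightarrow> ((nat \<Rightarrow> int) \<Rightarrow> rat) \<Rightarrow> ((nat \<Rightarrow> int) \<Rightarrow> rat)" where
  "sig n q f = (\<lambda>k. \<Sum>S\<in>{S. S \<subseteq> {1..n} \<and> card S = q}. f (shiftS k S))"

lemma shiftS_upd: "(shiftS k S)(a := shiftS k S a + 1) = shiftS (k(a := k a + 1)) S"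
  by (rule ext) (simp add: shiftS_def)

lemma sig_shiftE: "sig n q (shiftE a f) = shiftE a (sig n q f)"
  by (rule ext) (simp add: sig_def shiftE_def shiftS_upd)

lemma sig_opT: "sig n q (opT a b f) = opT a b (sig n q f)"
proof (rule ext)
  fix k
  have "sig n q (opT a b f) k = sig n q f k - sig n q (shiftE a f) k + sig n q (shiftE a (shiftE b f)) k"
    by (simp add: sig_def opT_def sum.distrib sum_subtractf)
  then show "sig n q (opT a b f) k = opT a b (sig n q f) k"
    by (simp add: sig_shiftE opT_def)
qed

lemma opT_scale: "opT a b (\<lambda>k. c * f k) = (\<lambda>k. c * opT a b f k)"
  by (rule ext) (simp add: opT_def shiftE_def algebra_simps)

lemma sig_foldr: "sig n q (foldr (\<lambda>(p, q). opT p q) L g) = foldr (\<lambda>(p, q). opT p q) L (sig n q g)"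
  by (induction L) (auto simp: sig_opT)

lemma foldr_scale: "foldr (\<lambda>(p, q). opT p q) L (\<lambda>k. c * g k) = (\<lambda>k. c * foldr (\<lambda>(p, q). opT p q) L g k)"
  by (induction L) (auto simp: opT_scale)

lemma sig_vdm: "sig n q (vdm n) = (\<lambda>k. of_nat (n choose q) * vdm n k)"
  by (rule ext) (unfold sig_def shiftS_def, rule vdm_esym)

lemma sig_alpha: "sig n q (alpha n) k = of_nat (n choose q) * alpha n k"
  unfolding alpha_def sig_foldr sig_vdm foldr_scale ..

lemma esym_split:
  assumes r: "r \<in> {1..n}"
  shows "esym_shift n r p f (k(r := k r + 1)) + esym_shift n r (Suc p) f k = sig n (Suc p) f k"
proof -
  define A where "A = {S. S \<subseteq> {1..n} \<and> card S = Suc p}"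
  define A1 where "A1 = {S. S \<subseteq> {1..n} - {r} \<and> card S = p}"
  define A2 where "A2 = {S. S \<subseteq> {1..n} - {r} \<and> card S = Suc p}"
  have fin: "finite A" unfolding A_def by (rule finite_subset[of _ "Pow {1..n}"]) auto
  have A_eq: "A = insert r ` A1 \<union> A2"
  proof
    show "A \<subseteq> insert r ` A1 \<union> A2"
    proof
      fix S assume S: "S \<in> A"
      show "S \<in> insert r ` A1 \<union> A2"
      proof (cases "r \<in> S")
        case True
        have "finite S" using S unfolding A_def by (auto intro: finite_subset)
        then have "S - {r} \<in> A1" using S True unfolding A_def A1_def by auto
        moreover have "S = insert r (S - {r})" using True by auto
        ultimately show ?thesis by blast
      next
        case False
        then show ?thesis using S unfolding A_def A2_def by auto
      qed
    qed
  next
    show "insert r ` A1 \<union> A2 \<subseteq> A"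
    proof
      fix S assume "S \<in> insert r ` A1 \<union> A2"
      then show "S \<in> A"
      proof
        assume "S \<in> insert r ` A1"
        then obtain T where T: "T \<in> A1" "S = insert r T" by blast
        have "finite T" using T unfolding A1_def by (auto intro: finite_subset)
        moreover have "r \<notin> T" using T unfolding A1_def by auto
        ultimately show "S \<in> A" using T r unfolding A_def A1_def by auto
      next
        assume "S \<in> A2" then show "S \<in> A" unfolding A_def A2_def by auto
      qed
    qed
  qed
  have disj: "insert r ` A1 \<inter> A2 = {}" unfolding A1_def A2_def by auto
  have inj: "inj_on (insert r) A1" unfolding A1_def inj_on_def by auto
  have "sig n (Suc p) f k = (\<Sum>S\<in>A. f (shiftS k S))" by (simp add: sig_def A_def)
  also have "\<dots> = (\<Sum>S\<in>insert r ` A1. f (shiftS k S)) + (\<Sum>S\<in>A2. f (shiftS k S))"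
    unfolding A_eq by (rule sum.union_disjoint) (use fin A_eq disj in auto)
  also have "(\<Sum>S\<in>insert r ` A1. f (shiftS k S)) = (\<Sum>T\<in>A1. f (shiftS k (insert r T)))"
    by (rule sum.reindex[OF inj, unfolded comp_def])
  also have "\<dots> = (\<Sum>T\<in>A1. f (shiftS (k(r := k r + 1)) T))"
  proof (rule sum.cong[OF refl])
    fix T assume "T \<in> A1"
    then have "r \<notin> T" unfolding A1_def by auto
    then have "shiftS k (insert r T) = shiftS (k(r := k r + 1)) T" by (auto simp: shiftS_def)
    then show "f (shiftS k (insert r T)) = f (shiftS (k(r := k r + 1)) T)" by simp
  qed
  also have "\<dots> = esym_shift n r p f (k(r := k r + 1))"
    by (simp add: esym_shift_def A1_def shiftS_def)
  also have "(\<Sum>S\<in>A2. f (shiftS k S)) = esym_shift n r (Suc p) f k"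
    by (simp add: esym_shift_def A2_def shiftS_def)
  finally show ?thesis by (simp add: fun_upd_def)
qed



lemma alt_pascal:
  fixes f :: "nat \<Rightarrow> rat"
  shows "(\<Sum>j\<le>Suc n. (-1)^j * of_nat (Suc n choose j) * f j) = (\<Sum>j\<le>n. (-1)^j * of_nat (n choose j) * (f j - f (Suc j)))"
proof -
  have "(\<Sum>j\<le>Suc n. (-1)^j * of_nat (Suc n choose j) * f j) =
     f 0 + (\<Sum>j\<le>n. (-1)^(Suc j) * of_nat (n choose Suc j) * f (Suc j)) + (\<Sum>j\<le>n. (-1)^(Suc j) * of_nat (n choose j) * f (Suc j))"
    by (subst sum.atMost_Suc_shift) (simp add: sum.distrib algebra_simps del: power_Suc)
  also have "f 0 + (\<Sum>j\<le>n. (-1)^(Suc j) * of_nat (n choose Suc j) * f (Suc j)) = (\<Sum>j\<le>n. (-1)^j * of_nat (n choose j) * f j)"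
  proof (cases n)
    case 0 then show ?thesis by simp
  next
    case (Suc n')
    have "(\<Sum>j\<le>n. (-1)^j * of_nat (n choose j) * f j) = f 0 + (\<Sum>j\<le>n'. (-1)^(Suc j) * of_nat (n choose Suc j) * f (Suc j))"
      unfolding Suc by (subst sum.atMost_Suc_shift) simp
    moreover have "(\<Sum>j\<le>n. (-1)^(Suc j) * of_nat (n choose Suc j) * f (Suc j)) = (\<Sum>j\<le>n'. (-1)^(Suc j) * of_nat (n choose Suc j) * f (Suc j))"
      unfolding Suc by (subst sum.atMost_Suc) (simp add: binomial_eq_0 del: binomial_Suc_Suc)
    ultimately show ?thesis by simp
  qed
  finally show ?thesis by (simp add: sum.distrib[symmetric] sum_subtractf[symmetric] algebra_simps)
qed

lemma alt_sum_zero: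
  "m < n \<Longrightarrow> (\<Sum>j\<le>n. (-1)^j * of_nat (n choose j) * ((w - of_nat j) gchoose m)) = (0::rat)"
proof (induction n arbitrary: w m)
  case 0 then show ?case by simp
next
  case (Suc n)
  have "(\<Sum>j\<le>Suc n. (-1)^j * of_nat (Suc n choose j) * ((w - of_nat j) gchoose m)) =
    (\<Sum>j\<le>n. (-1)^j * of_nat (n choose j) * (((w - of_nat j) gchoose m) - ((w - of_nat (Suc j)) gchoose m)))"
    by (rule alt_pascal)
  also have "\<dots> = 0"
  proof (cases m)
    case 0 then show ?thesis by simp
  next
    case (Suc m')
    have "\<And>j. ((w - of_nat j) gchoose m) - ((w - of_nat (Suc j)) gchoose m) = ((w - 1) - of_nat j) gchoose m'"
    proof -
      fix j
      have eq: "(w - of_nat j) gchoose Suc m' = ((w - 1 - of_nat j) gchoose m') + ((w - 1 - of_nat j) gchoose Suc m')"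
        using gbinomial_Suc_Suc[of "w - 1 - of_nat j" m'] by simp
      have e2: "w - of_nat (Suc j) = w - 1 - of_nat j" by simp
      show "((w - of_nat j) gchoose m) - ((w - of_nat (Suc j)) gchoose m) = ((w - 1) - of_nat j) gchoose m'"
        unfolding Suc e2 eq by simp
    qed
    then have "(\<Sum>j\<le>n. (-1)^j * of_nat (n choose j) * (((w - of_nat j) gchoose m) - ((w - of_nat (Suc j)) gchoose m)))
       = (\<Sum>j\<le>n. (-1)^j * of_nat (n choose j) * (((w - 1) - of_nat j) gchoose m'))" by simp
    also have "\<dots> = 0" using Suc.IH[of m' "w - 1"] Suc.prems Suc by simp
    finally show ?thesis .
  qed
  finally show ?case .
qed

lemma binom_key:
  assumes "1 \<le> n"
  shows "(\<Sum>p<n. (-1)^p * of_nat (n choose Suc p) * ((w - 1 - of_nat p) gchoose (n - 1))) = (w :: rat) gchoose (n - 1)"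
proof -
  obtain n' where n: "n = Suc n'" using assms by (cases n) auto
  have "0 = (\<Sum>j\<le>n. (-1)^j * of_nat (n choose j) * ((w - of_nat j) gchoose (n - 1)))"
    using alt_sum_zero[of "n - 1" n w] n by simp
  also have "\<dots> = (w gchoose (n - 1)) + (\<Sum>p\<le>n'. (-1)^(Suc p) * of_nat (n choose Suc p) * ((w - of_nat (Suc p)) gchoose (n - 1)))"
    unfolding n by (subst sum.atMost_Suc_shift) simp
  also have "(\<Sum>p\<le>n'. (-1)^(Suc p) * of_nat (n choose Suc p) * ((w - of_nat (Suc p)) gchoose (n - 1)))
     = - (\<Sum>p<n. (-1)^p * of_nat (n choose Suc p) * ((w - 1 - of_nat p) gchoose (n - 1)))"
    unfolding n lessThan_Suc_atMost by (simp add: sum_negf[symmetric] algebra_simps)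
  finally show ?thesis by simp
qed



theorem lemma1:
  fixes n r :: nat and z :: int and k :: "nat \<Rightarrow> int"
  assumes "1 \<le> n" and "1 \<le> r" and "r \<le> n"
  shows "alpha n (k(r := k r + z)) =
    (\<Sum>p<n. (-1) ^ p * ((of_int (int n - 1 - int p + z) :: rat) gchoose (n - 1))
             * esym_shift n r p (alpha n) k)"
proof -
  have r: "r \<in> {1..n}" using assms by simp
  obtain n' where n: "n = Suc n'" using assms(1) by (cases n) auto
  define A where "A = alpha n"
  define G where "G p k = esym_shift n r p A k" for p k
  define c where "c z p = (of_int (int n - 1 - int p + z) :: rat) gchoose (n - 1)" for z p
  define Phi where "Phi z k = (\<Sum>p<n. (-1)^p * c z p * G p k)" for z k
  have fin: "finite ({1..n} - {r})" by simp
  have G0: "G 0 k = A k" for k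
  proof -
    have "{S. S \<subseteq> {1..n} - {r} \<and> card S = 0} = {{}}"
    proof
      show "{S. S \<subseteq> {1..n} - {r} \<and> card S = 0} \<subseteq> {{}}"
      proof
        fix S assume "S \<in> {S. S \<subseteq> {1..n} - {r} \<and> card S = 0}"
        then have "S \<subseteq> {1..n} - {r}" "card S = 0" by auto
        moreover then have "finite S" using finite_subset fin by blast
        ultimately show "S \<in> {{}}" by simp
      qed
    qed auto
    then show ?thesis by (simp add: G_def esym_shift_def)
  qed
  have Gn: "G n k = 0" for k
  proof -
    have E: "{S. S \<subseteq> {1..n} - {r} \<and> card S = n} = {}"
    proof -
      { fix S assume S: "S \<subseteq> {1..n} - {r}" "card S = n"
        have "card ({1..n} - {r}) = n - 1" using r by simp
        then have "card S \<le> n - 1" using card_mono[OF fin S(1)] by simp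
        then have False using S(2) assms(1) by simp }
      then show ?thesis by blast
    qed
    show ?thesis unfolding G_def esym_shift_def E by simp
  qed
  have R: "G p (k(r := k r + 1)) = of_nat (n choose Suc p) * A k - G (Suc p) k" for p k
    using esym_split[OF r, of p A k] sig_alpha[of n "Suc p" k] by (simp add: G_def A_def)
  have base0: "Phi 0 k = A k" for k
  proof -
    have "Phi 0 k = (\<Sum>p<n. (if p = 0 then G p k else 0))"
      unfolding Phi_def
    proof (rule sum.cong[OF refl])
      fix p assume "p \<in> {..<n}"
      then have p: "p < n" by simp
      have "c 0 p = of_nat ((n - 1 - p) choose (n - 1))"
      proof -
        have "(of_int (int n - 1 - int p + 0) :: rat) = of_nat (n - 1 - p)"
          using p by (simp add: of_nat_diff)
        then show ?thesis unfolding c_def by (simp add: binomial_gbinomial)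
      qed
      also have "\<dots> = (if p = 0 then 1 else 0)"
        using p by (auto simp: binomial_eq_0)
      finally show "(-1)^p * c 0 p * G p k = (if p = 0 then G p k else 0)" by simp
    qed
    also have "\<dots> = G 0 k" using assms(1) by simp
    finally show ?thesis using G0 by simp
  qed
  have step: "Phi z (k(r := k r + 1)) = Phi (z + 1) k" for z k
  proof -
    define w where "w = (of_int (int n + z) :: rat)"
    have cz: "c z p = (w - 1 - of_nat p) gchoose (n - 1)" for p
      unfolding c_def w_def by (simp add: algebra_simps)
    have cz1: "c (z + 1) 0 = w gchoose (n - 1)"
      unfolding c_def w_def by (simp add: algebra_simps)
    have czs: "c (z + 1) (Suc p) = c z p" for p
      unfolding c_def by (simp add: algebra_simps)
    have "Phi z (k(r := k r + 1)) = (\<Sum>p<n. (-1)^p * c z p * (of_nat (n choose Suc p) * A k - G (Suc p) k))"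
      unfolding Phi_def R ..
    also have "\<dots> = (\<Sum>p<n. (-1)^p * of_nat (n choose Suc p) * c z p) * A k - (\<Sum>p<n. (-1)^p * c z p * G (Suc p) k)"
      by (simp add: sum_subtractf sum_distrib_right sum_distrib_left algebra_simps)
    also have "(\<Sum>p<n. (-1)^p * of_nat (n choose Suc p) * c z p) = c (z + 1) 0"
      unfolding cz cz1 by (rule binom_key[OF assms(1)])
    also have "(\<Sum>p<n. (-1)^p * c z p * G (Suc p) k) = (\<Sum>p<n'. (-1)^p * c z p * G (Suc p) k)"
      unfolding n by (simp add: Gn[unfolded n])
    finally have L: "Phi z (k(r := k r + 1)) = c (z + 1) 0 * A k - (\<Sum>p<n'. (-1)^p * c z p * G (Suc p) k)" .
    have "Phi (z + 1) k = c (z + 1) 0 * G 0 k + (\<Sum>p<n'. (-1)^(Suc p) * c (z + 1) (Suc p) * G (Suc p) k)"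
      unfolding Phi_def n by (subst sum.lessThan_Suc_shift) simp
    also have "\<dots> = c (z + 1) 0 * A k - (\<Sum>p<n'. (-1)^p * c z p * G (Suc p) k)"
      by (simp add: czs G0 sum_negf[symmetric])
    finally show ?thesis using L by simp
  qed
  have main: "\<forall>k. A (k(r := k r + z)) = Phi z k"
  proof (induction z rule: int_induct[where k = 0])
    case base
    then show ?case by (simp add: base0)
  next
    case (step1 i)
    show ?case
    proof
      fix k :: "nat \<Rightarrow> int"
      have "A (k(r := k r + (i + 1))) = A ((k(r := k r + 1))(r := (k(r := k r + 1)) r + i))"
        by (simp add: algebra_simps)
      also have "\<dots> = Phi i (k(r := k r + 1))" using step1.IH by blast
      also have "\<dots> = Phi (i + 1) k" by (rule step)
      finally show "A (k(r := k r + (i + 1))) = Phi (i + 1) k" .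
    qed
  next
    case (step2 i)
    show ?case
    proof
      fix k :: "nat \<Rightarrow> int"
      define k' where "k' = k(r := k r - 1)"
      have "A (k(r := k r + (i - 1))) = A (k'(r := k' r + i))"
        by (simp add: k'_def algebra_simps)
      also have "\<dots> = Phi i k'" using step2.IH by blast
      also have "\<dots> = Phi ((i - 1) + 1) k'" by simp
      also have "\<dots> = Phi (i - 1) (k'(r := k' r + 1))" by (rule step[symmetric])
      also have "k'(r := k' r + 1) = k" by (simp add: k'_def)
      finally show "A (k(r := k r + (i - 1))) = Phi (i - 1) k" .
    qed
  qed
  then show ?thesis by (simp add: Phi_def c_def G_def A_def)
qed


end
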